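(* Let $S$ be a closed type of system $\mathcal{F}$ which is $\forall^+$ (a type with positive quantifiers) and does not contain the type constant $O$. Then $S$ is an output type: for every normal $\lambda$-term $t$ and every term variable $\alpha$, if $\alpha : O \vdash_{\mathcal F} t : S$, then $\alpha \notin Fv(t)$.
   Context: $\lambda$-terms are those of the untyped $\lambda$-calculus; $(t)u$ denotes application, $Fv(t)$ the set of free variables of $t$, and a term is normal if it contains no $\beta$-redex. Types of system $\mathcal F$ are built from type variables and type constants (atomic types on which one cannot quantify; $O$ is such a constant) with the connectives $\rightarrow$ and $\forall$; only proper types are considered, i.e. in every subformula $\forall X A$ the variable $X$ occurs free in $A$. A type is closed if it has no free type variable. A context is $\Gamma = x_1:A_1,\dots,x_n:A_n$. The judgement $\Gamma \vdash_{\mathcal F} t : A$ is generated by: (ax) $\Gamma \vdash x_i : A_i$; ($\rightarrow_i$) from $\Gamma, x:B \vdash t : C$ infer $\Gamma \vdash \lambda x t : B \rightarrow C$; ($\rightarrow_e$) from $\Gamma \vdash u : B\rightarrow C$ and $\Gamma \vdash v : B$ infer $\Gamma \vdash (u)v : C$; ($\forall_i$) from $\Gamma \vdash t : A$ with $X$ not free in $\Gamma$ infer $\Gamma \vdash t : \forall X A$; ($\forall_e$) from $\Gamma \vdash t : \forall X A$ infer $\Gamma \vdash t : A[C/X]$ for any type $C$. The classes $\forall^+$ and $\forall^-$ are defined by: every type variable is both $\forall^+$ and $\forall^-$; if $A$ is $\forall^+$ (resp. $\forall^-$) and $B$ is $\forall^-$ (resp. $\forall^+$) then $B\rightarrow A$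 is $\forall^+$ (resp. $\forall^-$); if $A$ is $\forall^+$ and $X$ is free in $A$ then $\forall X A$ is $\forall^+$. *)

theory Defs
  imports Main
begin

type_synonym var = nat

datatype trm = Var var | App trm trm | Lam var trm

fun fv :: "trm \<Rightarrow> var set" where
  "fv (Var x) = {x}"
| "fv (App u v) = fv u \<union> fv v"
| "fv (Lam x t) = fv t - {x}"

fun is_lam :: "trm \<Rightarrow> bool" where
  "is_lam (Lam x t) = True"
| "is_lam _ = False"

fun normal :: "trm \<Rightarrow> bool" where
  "normal (Var x) = True"
| "normal (Lam x t) = normal t"
| "normal (App u v) = (normal u \<and> normal v \<and> \<not> is_lam u)"

section \<open>Types of system F (type variables as de Bruijn indices)\<close>

datatype ty = TVar nat | TCon string | Arr ty ty | All ty

definition O_ty :: ty where "O_ty = TCon ''O''"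

fun lift :: "nat \<Rightarrow> ty \<Rightarrow> ty" where
  "lift k (TVar i) = (if i < k then TVar i else TVar (Suc i))"
| "lift k (TCon c) = TCon c"
| "lift k (Arr A B) = Arr (lift k A) (lift k B)"
| "lift k (All A) = All (lift (Suc k) A)"

fun subst :: "nat \<Rightarrow> ty \<Rightarrow> ty \<Rightarrow> ty" where
  "subst k C (TVar i) = (if i < k then TVar i else if i = k then C else TVar (i - 1))"
| "subst k C (TCon c) = TCon c"
| "subst k C (Arr A B) = Arr (subst k C A) (subst k C B)"
| "subst k C (All A) = All (subst (Suc k) (lift 0 C) A)"

fun occ :: "nat \<Rightarrow> ty \<Rightarrow> bool" where
  "occ k (TVar i) = (i = k)"
| "occ k (TCon c) = False"
| "occ k (Arr A B) = (occ k A \<or> occ k B)"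
| "occ k (All A) = occ (Suc k) A"

fun closed_at :: "nat \<Rightarrow> ty \<Rightarrow> bool" where
  "closed_at k (TVar i) = (i < k)"
| "closed_at k (TCon c) = True"
| "closed_at k (Arr A B) = (closed_at k A \<and> closed_at k B)"
| "closed_at k (All A) = closed_at (Suc k) A"

definition closed_ty :: "ty \<Rightarrow> bool" where
  "closed_ty A = closed_at 0 A"

fun proper :: "ty \<Rightarrow> bool" where
  "proper (TVar i) = True"
| "proper (TCon c) = True"
| "proper (Arr A B) = (proper A \<and> proper B)"
| "proper (All A) = (occ 0 A \<and> proper A)"

fun has_con :: "string \<Rightarrow> ty \<Rightarrow> bool" where
  "has_con c (TVar i) = False"
| "has_con c (TCon d) = (c = d)"
| "has_con c (Arr A B) = (has_con c A \<or> has_con c B)"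
| "has_con c (All A) = has_con c A"

text \<open>The classes forall+ and forall-, following the paper's definition literally.\<close>
fun fpos :: "ty \<Rightarrow> bool" and fneg :: "ty \<Rightarrow> bool" where
  "fpos (TVar i) = True"
| "fneg (TVar i) = True"
| "fpos (TCon c) = False"
| "fneg (TCon c) = False"
| "fpos (Arr B A) = (fneg B \<and> fpos A)"
| "fneg (Arr B A) = (fpos B \<and> fneg A)"
| "fpos (All A) = (fpos A \<and> occ 0 A)"
| "fneg (All A) = False"

type_synonym ctx = "var \<Rightarrow> ty option"

inductive typing :: "ctx \<Rightarrow> trm \<Rightarrow> ty \<Rightarrow> bool" where
  ax: "\<Gamma> x = Some A \<Longrightarrow> typing \<Gamma> (Var x) A"
| arr_i: "proper B \<Longrightarrow> typing (\<Gamma>(x \<mapsto> B)) t C \<Longrightarrow> typing \<Gamma> (Lam x t) (Arr B C)"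
| arr_e: "typing \<Gamma> u (Arr B C) \<Longrightarrow> typing \<Gamma> v B \<Longrightarrow> typing \<Gamma> (App u v) C"
| all_i: "typing (map_option (lift 0) \<circ> \<Gamma>) t A \<Longrightarrow> occ 0 A \<Longrightarrow> typing \<Gamma> t (All A)"
| all_e: "typing \<Gamma> t (All A) \<Longrightarrow> proper C \<Longrightarrow> typing \<Gamma> t (subst 0 C A)"

definition output_type :: "ty \<Rightarrow> bool" where
  "output_type S = (\<forall>t \<alpha>. normal t \<longrightarrow> typing [\<alpha> \<mapsto> O_ty] t S \<longrightarrow> \<alpha> \<notin> fv t)"

end

theory Submission
  imports Defs
begin

fun gpos :: "ty \<Rightarrow> bool" and gneg :: "ty \<Rightarrow> bool" where
  "gpos (TVar i) = True"
| "gneg (TVar i) = True"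
| "gpos (TCon c) = False"
| "gneg (TCon c) = False"
| "gpos (Arr B A) = (gneg B \<and> gpos A)"
| "gneg (Arr B A) = (gpos B \<and> gneg A)"
| "gpos (All A) = gpos A"
| "gneg (All A) = False"

fun rigid :: "ty \<Rightarrow> bool" where
  "rigid (TVar i) = True"
| "rigid (TCon c) = True"
| "rigid (Arr B C) = rigid C"
| "rigid (All A) = False"

fun dropn :: "nat \<Rightarrow> ty \<Rightarrow> ty option" where
  "dropn 0 B = Some B"
| "dropn (Suc n) B = (case dropn n B of Some (Arr _ C) \<Rightarrow> Some C | _ \<Rightarrow> None)"

fun nhead :: "trm \<Rightarrow> var option" where
  "nhead (Var x) = Some x"
| "nhead (App u v) = nhead u"
| "nhead (Lam x t) = None"

lemma fpos_gpos: "(fpos A \<longrightarrow> gpos A) \<and> (fneg A \<longrightarrow> gneg A)"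
  by (induction A) auto

lemma g_lift: "(gpos (lift k A) = gpos A) \<and> (gneg (lift k A) = gneg A)"
  by (induction A arbitrary: k) auto

lemma g_subst: "(gpos (subst k C A) \<longrightarrow> gpos A) \<and> (gneg (subst k C A) \<longrightarrow> gneg A)"
  by (induction A arbitrary: k C) auto

lemma rigid_lift: "rigid (lift k A) = rigid A"
  by (induction A arbitrary: k) auto

lemma occ_lift: "\<not> occ k (lift k A)"
  by (induction A arbitrary: k) auto

lemma dropn_lift: "dropn n (lift k B) = map_option (lift k) (dropn n B)"
proof (induction n)
  case 0 then show ?case by simp
next
  case (Suc n)
  then show ?case
    apply (cases "dropn n B")
     apply simp
    subgoal for X by (cases X) auto
    done
qed

lemma dropn_rigid: "rigid B \<Longrightarrow> dropn n B = Some X \<Longrightarrow> rigid X"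
proof (induction n arbitrary: X)
  case 0 then show ?case by simp
next
  case (Suc n)
  then show ?case
    apply (cases "dropn n B")
     apply simp
    subgoal for Y by (cases Y) auto
    done
qed

lemma dropn_gneg: "gneg B \<Longrightarrow> dropn n B = Some X \<Longrightarrow> gneg X"
proof (induction n arbitrary: X)
  case 0 then show ?case by simp
next
  case (Suc n)
  then show ?case
    apply (cases "dropn n B")
     apply simp
    subgoal for Y by (cases Y) auto
    done
qed

lemma dropn_O: "dropn n O_ty = Some (Arr B C) \<Longrightarrow> False"
proof -
  have "\<forall>X. dropn n O_ty = Some X \<longrightarrow> X = O_ty"
  proof (induction n)
    case 0 then show ?case by simp
  next
    case (Suc n) then show ?case
      by (cases "dropn n O_ty") (auto simp: O_ty_def)
  qed
  then show "dropn n O_ty = Some (Arr B C) \<Longrightarrow> False" by (auto simp: O_ty_def)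
qed

lemma R: "typing \<Gamma> t A \<Longrightarrow> nhead t = Some h \<Longrightarrow> \<Gamma> h = Some B \<Longrightarrow> rigid B
  \<Longrightarrow> \<exists>n. dropn n B = Some A"
proof (induction arbitrary: h B rule: typing.induct)
  case (ax \<Gamma> x A)
  then show ?case by (rule_tac x=0 in exI) auto
next
  case (arr_i B \<Gamma> x t C)
  then show ?case by simp
next
  case (arr_e \<Gamma> u B' C v)
  have "nhead u = Some h" using arr_e.prems(1) by simp
  then obtain n where "dropn n B = Some (Arr B' C)" using arr_e.IH(1) arr_e.prems(2,3) by blast
  then show ?case by (rule_tac x="Suc n" in exI) simp
next
  case (all_i \<Gamma> t A)
  then have "(map_option (lift 0) \<circ> \<Gamma>) h = Some (lift 0 B)" by simp
  with all_i obtain n where "dropn n (lift 0 B) = Some A" using rigid_lift by blast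
  then have "\<not> occ 0 A" using occ_lift by (auto simp: dropn_lift)
  with all_i show ?case by simp
next
  case (all_e \<Gamma> t A C)
  then obtain n where "dropn n B = Some (All A)" by blast
  with all_e dropn_rigid have "rigid (All A)" by blast
  then show ?case by simp
qed

lemma G: "typing \<Gamma> t A \<Longrightarrow> t = App u v \<Longrightarrow> nhead u = Some h \<Longrightarrow> \<Gamma> h = Some B \<Longrightarrow> rigid B
  \<Longrightarrow> \<exists>B'. typing \<Gamma> u (Arr B' A) \<and> typing \<Gamma> v B'"
proof (induction arbitrary: u v h B rule: typing.induct)
  case (all_i \<Gamma> t A)
  then have "(map_option (lift 0) \<circ> \<Gamma>) h = Some (lift 0 B)" by simp
  with all_i R[OF all_i(1)] obtain n where "dropn n (lift 0 B) = Some A" using rigid_lift by fastforce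
  then have "\<not> occ 0 A" using occ_lift by (auto simp: dropn_lift)
  with all_i show ?case by simp
next
  case (all_e \<Gamma> t A C)
  with R[OF all_e(1)] obtain n where "dropn n B = Some (All A)" by fastforce
  with all_e dropn_rigid have "rigid (All A)" by blast
  then show ?case by simp
qed auto

lemma fv_dom: "typing \<Gamma> t A \<Longrightarrow> x \<in> fv t \<Longrightarrow> \<Gamma> x \<noteq> None"
  apply (induction arbitrary: x rule: typing.induct)
      apply auto
  by (metis option.distinct(1))

lemma nhead_fv: "nhead t = Some h \<Longrightarrow> h \<in> fv t"
  by (induction t) auto

lemma nhead_normal: "normal u \<Longrightarrow> \<not> is_lam u \<Longrightarrow> nhead u \<noteq> None"
  by (induction u) auto

definition good :: "var \<Rightarrow> ctx \<Rightarrow> bool" where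
  "good a \<Gamma> = (\<Gamma> a = Some O_ty \<and> (\<forall>y B. y \<noteq> a \<longrightarrow> \<Gamma> y = Some B \<longrightarrow> gneg B))"

lemma good_lift: "good a \<Gamma> \<Longrightarrow> good a (map_option (lift 0) \<circ> \<Gamma>)"
  unfolding good_def using g_lift by (auto simp: O_ty_def)

lemma LamL: "typing \<Gamma> t A \<Longrightarrow> t = Lam x s \<Longrightarrow> good a \<Gamma> \<Longrightarrow> gpos A
  \<Longrightarrow> (\<And>\<Gamma>' A'. good a \<Gamma>' \<Longrightarrow> typing \<Gamma>' s A' \<Longrightarrow> gpos A' \<Longrightarrow> a \<notin> fv s)
  \<Longrightarrow> a \<notin> fv (Lam x s)"
proof (induction arbitrary: x s rule: typing.induct)
  case (arr_i B \<Gamma> x' t C)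
  show ?case
  proof (cases "x = a")
    case True then show ?thesis by simp
  next
    case False
    have "good a (\<Gamma>(x \<mapsto> B))" using arr_i False unfolding good_def by auto
    then show ?thesis using arr_i by auto
  qed
next
  case (all_i \<Gamma> t A)
  show ?case using all_i.IH[OF all_i.prems(1) good_lift[OF all_i.prems(2)] _ all_i.prems(4)] all_i.prems(3) by simp
next
  case (all_e \<Gamma> t A C)
  then show ?case using g_subst by auto
qed auto

lemma main: "good a \<Gamma> \<Longrightarrow> normal t \<Longrightarrow> typing \<Gamma> t A
  \<Longrightarrow> gpos A \<or> (\<exists>h. nhead t = Some h \<and> h \<noteq> a) \<Longrightarrow> a \<notin> fv t"
proof (induction t arbitrary: \<Gamma> A)
  case (Var x)
  show ?case
  proof (cases "x = a")
    case True
    with Var have "\<Gamma> x = Some O_ty" by (simp add: good_def)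
    have "rigid O_ty" by (simp add: O_ty_def)
    from R[OF Var(3) _ \<open>\<Gamma> x = Some O_ty\<close> this] obtain n where "dropn n O_ty = Some A" by auto
    moreover have "\<forall>X. dropn n O_ty = Some X \<longrightarrow> X = O_ty"
    proof (induction n)
      case 0 then show ?case by simp
    next
      case (Suc n) then show ?case
        by (cases "dropn n O_ty") (auto simp: O_ty_def)
    qed
    ultimately have "A = O_ty" by blast
    with Var True show ?thesis by (auto simp: O_ty_def)
  qed simp
next
  case (Lam x s)
  then have "gpos A" by simp
  show ?case
    by (rule LamL[OF Lam(4) refl Lam(2) \<open>gpos A\<close>]) (use Lam in auto)
next
  case (App u v)
  then have nu: "normal u" "normal v" "\<not> is_lam u" by auto
  then obtain h where h: "nhead u = Some h" using nhead_normal by blast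
  then have "h \<in> fv (App u v)" using nhead_fv by auto
  then obtain B where B: "\<Gamma> h = Some B" using fv_dom[OF App(5)] by blast
  have rB: "rigid B"
  proof (cases "h = a")
    case True then show ?thesis using App(3) B by (auto simp: good_def O_ty_def)
  next
    case False then have "gneg B" using App(3) B by (auto simp: good_def)
    then show ?thesis
    proof -
      have "\<And>X. gneg X \<Longrightarrow> rigid X" proof - fix X show "gneg X \<Longrightarrow> rigid X" by (induction X) auto qed
      then show ?thesis using \<open>gneg B\<close> by blast
    qed
  qed
  obtain B' where tu: "typing \<Gamma> u (Arr B' A)" and tv: "typing \<Gamma> v B'"
    using G[OF App(5) refl h B rB] by blast
  obtain n where dn: "dropn n B = Some (Arr B' A)" using R[OF tu h B rB] by blast
  have ha: "h \<noteq> a"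
  proof
    assume "h = a"
    then have "B = O_ty" using App(3) B by (simp add: good_def)
    with dn dropn_O show False by blast
  qed
  then have "gneg B" using App(3) B by (auto simp: good_def)
  then have "gneg (Arr B' A)" using dn dropn_gneg by blast
  then have "gpos B'" by simp
  have "a \<notin> fv v" using App.IH(2)[OF App(3) nu(2) tv] \<open>gpos B'\<close> by blast
  moreover have "a \<notin> fv u" using App.IH(1)[OF App(3) nu(1) tu] h ha by blast
  ultimately show ?case by simp
qed

theorem theorem2p1p7:
  assumes "closed_ty S" and "proper S" and "fpos S" and "\<not> has_con ''O'' S"
  shows "output_type S"
  unfolding output_type_def
proof (intro allI impI)
  fix t \<alpha>
  assume "normal t" "typing [\<alpha> \<mapsto> O_ty] t S"
  moreover have "good \<alpha> [\<alpha> \<mapsto> O_ty]" by (simp add: good_def)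
  moreover have "gpos S" using assms(3) fpos_gpos by blast
  ultimately show "\<alpha> \<notin> fv t" using main by blast
qed

end
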